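(* Let $X$ be a Minkowski plane and let $A=\{\mathbf{x}_0,\mathbf{x}_1,\dots,\mathbf{x}_{2k-1}\}\subset X$ (distinct points). Suppose that $\mathbf{x}_0\in\mathrm{FT}(A)$ and that $\mathbf{x}_0$ is a vertex of $\operatorname{conv}A$. Then $A$ is a pseudo double cluster with $\mathbf{x}_0$ as centre.
   Context: A Minkowski plane is a two-dimensional real normed space $(X,\|\cdot\|)$ with unit ball $B$. A proper exposed face of $B$ is the intersection of $B$ with a supporting line of $B$. For finite $A\subset X$, a Fermat-Torricelli (FT) point of $A$ is a minimizer of $\mathbf{x}\mapsto\sum_{\mathbf{a}\in A}\|\mathbf{x}-\mathbf{a}\|$, and $\mathrm{FT}(A)$ is the set of all FT points. A set $C=\{\mathbf{x}_1,\dots,\mathbf{x}_m,\mathbf{y}_1,\dots,\mathbf{y}_m\}$ is a double cluster with pairs $\mathbf{x}_i,\mathbf{y}_i$ if all unit vectors $\frac{\mathbf{x}_i-\mathbf{y}_i}{\|\mathbf{x}_i-\mathbf{y}_i\|}$ lie in the same proper exposed face of $B$. A set $A$ is a pseudo double cluster if $A$ is the union of a double cluster $C$, an FT point of $C$ (called the centre of the pseudo double cluster), and one further arbitrary point. *)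

theory Defs
  imports "HOL-Analysis.Analysis"
begin

definition minkowski_plane :: "'a::real_normed_vector itself \<Rightarrow> bool" where
  "minkowski_plane _ \<longleftrightarrow> dim (UNIV :: 'a set) = 2"

definition supporting_line_of_ball :: "'a::real_normed_vector set \<Rightarrow> bool" where
  "supporting_line_of_ball L \<longleftrightarrow>
     (\<exists>f c. linear (f :: 'a \<Rightarrow> real) \<and> (\<exists>v. f v \<noteq> 0) \<and> L = {x. f x = c} \<and>
        (\<forall>x\<in>cball 0 1. f x \<le> c) \<and> (\<exists>x\<in>cball 0 1. f x = c))"

definition proper_exposed_face :: "'a::real_normed_vector set \<Rightarrow> bool" where
  "proper_exposed_face F \<longleftrightarrow>
     (\<exists>L. supporting_line_of_ball L \<and> F = cball 0 1 \<inter> L)"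

definition FT :: "'a::real_normed_vector set \<Rightarrow> 'a set" where
  "FT A = {x. \<forall>z. (\<Sum>a\<in>A. norm (x - a)) \<le> (\<Sum>a\<in>A. norm (z - a))}"

definition double_cluster :: "'a::real_normed_vector set \<Rightarrow> bool" where
  "double_cluster C \<longleftrightarrow>
     (\<exists>m (xs :: nat \<Rightarrow> 'a) ys F.
        C = xs ` {..<m} \<union> ys ` {..<m} \<and> card C = 2 * m \<and>
        proper_exposed_face F \<and>
        (\<forall>i<m. (1 / norm (xs i - ys i)) *\<^sub>R (xs i - ys i) \<in> F))"

definition pseudo_double_cluster_centre :: "'a::real_normed_vector set \<Rightarrow> 'a \<Rightarrow> bool" where
  "pseudo_double_cluster_centre A c \<longleftrightarrow>
     (\<exists>C p. double_cluster C \<and> c \<in> FT C \<and> A = C \<union> {c} \<union> {p})"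

end

theory Submission
  imports Defs
begin



lemma coords:
  assumes "minkowski_plane TYPE('a::real_normed_vector)"
  shows "\<exists>(b1::'a) b2 g1 g2. linear g1 \<and> linear g2 \<and> (\<forall>x. x = g1 x *\<^sub>R b1 + g2 x *\<^sub>R b2)
     \<and> g1 b1 = (1::real) \<and> g1 b2 = 0 \<and> g2 b1 = 0 \<and> g2 b2 = (1::real)"
proof -
  obtain B :: "'a set" where B: "independent B" "UNIV \<subseteq> span B" "card B = dim (UNIV::'a set)"
    by (rule basis_exists[of "UNIV::'a set"])
  have "dim (UNIV::'a set) = 2" using assms unfolding minkowski_plane_def .
  then have "card B = 2" using B(3) by simp
  then obtain b1 b2 where b: "B = {b1, b2}" "b1 \<noteq> b2" by (auto simp: card_2_iff)
  obtain g1 :: "'a \<Rightarrow> real" where g1: "linear g1" "\<forall>x\<in>B. g1 x = (if x = b1 then 1 else 0)"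
    using linear_independent_extend[OF B(1), of "\<lambda>x. if x = b1 then 1 else 0"] by blast
  obtain g2 :: "'a \<Rightarrow> real" where g2: "linear g2" "\<forall>x\<in>B. g2 x = (if x = b2 then 1 else 0)"
    using linear_independent_extend[OF B(1), of "\<lambda>x. if x = b2 then 1 else 0"] by blast
  have lh: "linear (\<lambda>x. g1 x *\<^sub>R b1 + g2 x *\<^sub>R b2)"
    using g1(1) g2(1) by (auto simp: linear_iff scaleR_add_left scaleR_add_right)
  have dec: "\<forall>x. x = g1 x *\<^sub>R b1 + g2 x *\<^sub>R b2"
  proof
    fix x :: 'a
    have "id x = g1 x *\<^sub>R b1 + g2 x *\<^sub>R b2"
      apply (rule linear_eq_on[OF linear_id lh, of x B])
      using B(2) g1(2) g2(2) b by auto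
    then show "x = g1 x *\<^sub>R b1 + g2 x *\<^sub>R b2" by simp
  qed
  have "g1 b1 = 1" "g1 b2 = 0" "g2 b1 = 0" "g2 b2 = 1" using g1(2) g2(2) b by auto
  then show ?thesis using g1(1) g2(1) dec by blast
qed



lemma hb_core:
  fixes v w :: "'a::real_normed_vector" and lam kap :: "'a \<Rightarrow> real"
  assumes ll: "linear lam" and lk: "linear kap"
    and dec: "\<And>x. x = lam x *\<^sub>R v + kap x *\<^sub>R w" and lv: "lam v = 1" and kv: "kap v = 0"
  shows "\<exists>\<psi>. linear \<psi> \<and> \<psi> v = norm v \<and> (\<forall>x. \<psi> x \<le> norm x)"
proof -
  define Lo where "Lo = (\<lambda>c. c * norm v - norm (c *\<^sub>R v - w)) ` UNIV"
  have key: "c1 * norm v - norm (c1 *\<^sub>R v - w) \<le> norm (c2 *\<^sub>R v + w) - c2 * norm v" for c1 c2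
  proof -
    have "(c1 + c2) * norm v \<le> norm ((c1 + c2) *\<^sub>R v)" by (simp add: abs_ge_self mult_right_mono)
    also have "(c1 + c2) *\<^sub>R v = (c1 *\<^sub>R v - w) + (c2 *\<^sub>R v + w)" by (simp add: algebra_simps)
    also have "norm \<dots> \<le> norm (c1 *\<^sub>R v - w) + norm (c2 *\<^sub>R v + w)" by (rule norm_triangle_ineq)
    finally show ?thesis by (simp add: algebra_simps)
  qed
  have bdd: "bdd_above Lo" unfolding Lo_def
    using key[of _ 0] by (intro bdd_aboveI[of _ "norm w"]) auto
  have ne: "Lo \<noteq> {}" unfolding Lo_def by auto
  define \<gamma> where "\<gamma> = Sup Lo"
  have up: "c * norm v - norm (c *\<^sub>R v - w) \<le> \<gamma>" for c
    unfolding \<gamma>_def by (rule cSup_upper[OF _ bdd]) (auto simp: Lo_def)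
  have lo: "\<gamma> \<le> norm (c *\<^sub>R v + w) - c * norm v" for c
    unfolding \<gamma>_def by (rule cSup_least[OF ne]) (auto simp: Lo_def key)
  define \<psi> where "\<psi> x = lam x * norm v + kap x * \<gamma>" for x
  have lin: "linear \<psi>" using ll lk unfolding \<psi>_def linear_iff
    by (simp add: distrib_right distrib_left)
  have bnd: "\<psi> x \<le> norm x" for x
  proof -
    define c where "c = lam x"
    define s where "s = kap x"
    have x: "x = c *\<^sub>R v + s *\<^sub>R w" using dec[of x] by (simp add: c_def s_def)
    have "c * norm v + s * \<gamma> \<le> norm (c *\<^sub>R v + s *\<^sub>R w)"
    proof (cases "s > 0")
      case True
      have "c *\<^sub>R v + s *\<^sub>R w = s *\<^sub>R ((c / s) *\<^sub>R v + w)" using True by (simp add: scaleR_add_right)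
      then have e: "norm (c *\<^sub>R v + s *\<^sub>R w) = s * norm ((c / s) *\<^sub>R v + w)" using True by simp
      have "s * \<gamma> \<le> s * (norm ((c / s) *\<^sub>R v + w) - (c / s) * norm v)"
        using lo[of "c/s"] True by (intro mult_left_mono) auto
      also have "\<dots> = s * norm ((c / s) *\<^sub>R v + w) - c * norm v" using True by (simp add: right_diff_distrib)
      finally show ?thesis using e by simp
    next
      case False
      show ?thesis
      proof (cases "s = 0")
        case True
        then show ?thesis by (simp add: abs_ge_self mult_right_mono)
      next
        case False
        define r where "r = - s"
        have r: "r > 0" using False \<open>\<not> s > 0\<close> by (simp add: r_def)
        have "c *\<^sub>R v + s *\<^sub>R w = r *\<^sub>R ((c / r) *\<^sub>R v - w)" using r by (simp add: r_def scaleR_diff_right)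
        then have e: "norm (c *\<^sub>R v + s *\<^sub>R w) = r * norm ((c / r) *\<^sub>R v - w)" using r by simp
        have "r * ((c / r) * norm v - norm ((c / r) *\<^sub>R v - w)) \<le> r * \<gamma>"
          using up[of "c/r"] r by (intro mult_left_mono) auto
        also have "r * ((c / r) * norm v - norm ((c / r) *\<^sub>R v - w)) = c * norm v - r * norm ((c / r) *\<^sub>R v - w)"
          using r by (simp add: right_diff_distrib)
        finally show ?thesis using e by (simp add: r_def)
      qed
    qed
    moreover have "\<psi> x = c * norm v + s * \<gamma>" by (simp add: \<psi>_def c_def s_def)
    moreover have "norm x = norm (c *\<^sub>R v + s *\<^sub>R w)" using x by (rule arg_cong)
    ultimately show ?thesis by linarith
  qed
  have "\<psi> v = norm v" by (simp add: \<psi>_def lv kv)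
  then show ?thesis using lin bnd by blast
qed

lemma hb_half:
  fixes b1 b2 v :: "'a::real_normed_vector" and g1 g2 :: "'a \<Rightarrow> real"
  assumes l1: "linear g1" and l2: "linear g2" and dec: "\<And>x. x = g1 x *\<^sub>R b1 + g2 x *\<^sub>R b2"
    and nz: "g1 v \<noteq> 0"
  shows "\<exists>\<psi>. linear \<psi> \<and> \<psi> v = norm v \<and> (\<forall>x. \<psi> x \<le> norm x)"
proof (rule hb_core[of "\<lambda>x. g1 x / g1 v" "\<lambda>x. g2 x - g1 x * g2 v / g1 v" v b2])
  show "linear (\<lambda>x. g1 x / g1 v)" using l1 unfolding linear_iff by (simp add: add_divide_distrib)
  show "linear (\<lambda>x. g2 x - g1 x * g2 v / g1 v)" using l1 l2 unfolding linear_iff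
    by (simp add: algebra_simps add_divide_distrib)
  show "g1 v / g1 v = 1" using nz by simp
  show "g2 v - g1 v * g2 v / g1 v = 0" using nz by simp
  fix x
  have hv: "(g1 x / g1 v) *\<^sub>R v = (g1 x / g1 v) *\<^sub>R (g1 v *\<^sub>R b1 + g2 v *\<^sub>R b2)"
    using dec[of v] by (rule arg_cong)
  have "(g1 x / g1 v) *\<^sub>R v + (g2 x - g1 x * g2 v / g1 v) *\<^sub>R b2 = g1 x *\<^sub>R b1 + g2 x *\<^sub>R b2"
    unfolding hv using nz by (simp add: scaleR_add_right scaleR_diff_left)
  then show "x = (g1 x / g1 v) *\<^sub>R v + (g2 x - g1 x * g2 v / g1 v) *\<^sub>R b2"
    using dec[of x] by simp
qed

lemma hb:
  fixes b1 b2 v :: "'a::real_normed_vector" and g1 g2 :: "'a \<Rightarrow> real"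
  assumes l1: "linear g1" and l2: "linear g2" and dec: "\<And>x. x = g1 x *\<^sub>R b1 + g2 x *\<^sub>R b2"
  shows "\<exists>\<psi>. linear \<psi> \<and> \<psi> v = norm v \<and> (\<forall>x. \<psi> x \<le> norm x)"
proof (cases "g1 v = 0")
  case False
  then show ?thesis using hb_half[OF l1 l2 dec] by blast
next
  case g1: True
  show ?thesis
  proof (cases "g2 v = 0")
    case True
    then have "v = 0" using dec[of v] g1 by simp
    then show ?thesis by (intro exI[of _ "\<lambda>x. 0"]) (simp add: linear_zero)
  next
    case False
    have dec': "x = g2 x *\<^sub>R b2 + g1 x *\<^sub>R b1" for x using dec[of x] by (simp add: add.commute)
    show ?thesis using hb_half[OF l2 l1 dec' False] by blast
  qed
qed



lemma sep:
  fixes b1 b2 x0 :: "'a::real_normed_vector" and g1 g2 :: "'a \<Rightarrow> real"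
  assumes l1: "linear g1" and l2: "linear g2" and dec: "\<And>x. x = g1 x *\<^sub>R b1 + g2 x *\<^sub>R b2"
    and fin: "finite S" and ne: "S \<noteq> {}" and nin: "x0 \<notin> convex hull S"
  shows "\<exists>(l::'a\<Rightarrow>real) (mm::'a\<Rightarrow>real). linear l \<and> linear mm \<and> (\<forall>x\<in>S. l (x - x0) > 0) \<and> (\<forall>x. l x = 0 \<longrightarrow> mm x = 0 \<longrightarrow> x = 0)"
proof -
  define T where "T x = (g1 x, g2 x)" for x
  have lT: "linear T" using l1 l2 unfolding linear_iff T_def by simp
  have injT: "T x = T y \<Longrightarrow> x = y" for x y
    using dec[of x] dec[of y] unfolding T_def by (metis prod.inject)
  have cl: "closed (convex hull (T ` S))"
    using fin by (simp add: compact_imp_closed finite_imp_compact_convex_hull)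
  have "T x0 \<notin> convex hull (T ` S)"
  proof
    assume "T x0 \<in> convex hull (T ` S)"
    then have "T x0 \<in> T ` (convex hull S)" using convex_hull_linear_image[OF lT] by simp
    then obtain y where "y \<in> convex hull S" "T x0 = T y" by auto
    then show False using injT nin by metis
  qed
  then obtain a b where ab: "inner a (T x0) < b" "\<forall>x\<in>convex hull (T ` S). inner a x > b"
    using separating_hyperplane_closed_point[OF convex_convex_hull cl] by blast
  obtain a1 a2 where a: "a = (a1, a2)" by (cases a)
  define l where "l x = a1 * g1 x + a2 * g2 x" for x
  define mm where "mm x = a1 * g2 x - a2 * g1 x" for x
  have ll: "linear l" using l1 l2 unfolding linear_iff l_def by (simp add: algebra_simps)
  have lm: "linear mm" using l1 l2 unfolding linear_iff mm_def by (simp add: algebra_simps)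
  have lT': "l x = inner a (T x)" for x by (simp add: l_def a T_def)
  have pos: "\<forall>x\<in>S. l (x - x0) > 0"
  proof
    fix x assume "x \<in> S"
    then have "inner a (T x) > b" using ab(2) hull_subset[of "T ` S"] by auto
    then have "l x > l x0" using ab(1) lT' by simp
    then show "l (x - x0) > 0" using linear_diff[OF ll] by simp
  qed
  have anz: "a1 \<noteq> 0 \<or> a2 \<noteq> 0"
  proof (rule ccontr)
    assume "\<not> ?thesis"
    then have "a = 0" using a by (simp add: zero_prod_def)
    then show False using ab ne hull_subset[of "T ` S"] by fastforce
  qed
  have nd: "\<forall>x. l x = 0 \<longrightarrow> mm x = 0 \<longrightarrow> x = 0"
  proof (intro allI impI)
    fix x assume h: "l x = 0" "mm x = 0"
    have s: "a1 * a1 + a2 * a2 > 0" using anz by (metis add_pos_nonneg add_nonneg_pos not_real_square_gt_zero zero_le_square)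
    have "(a1 * a1 + a2 * a2) * g1 x = a1 * l x - a2 * mm x" by (simp add: l_def mm_def algebra_simps)
    then have e1: "g1 x = 0" using h s by auto
    have "(a1 * a1 + a2 * a2) * g2 x = a2 * l x + a1 * mm x" by (simp add: l_def mm_def algebra_simps)
    then have e2: "g2 x = 0" using h s by auto
    show "x = 0" using dec[of x] e1 e2 by simp
  qed
  show ?thesis using ll lm pos nd by blast
qed



lemma cone:
  fixes a b c :: "'a::real_normed_vector" and l mm :: "'a \<Rightarrow> real"
  assumes ll: "linear l" and lm: "linear mm" and nd: "\<forall>x. l x = 0 \<longrightarrow> mm x = 0 \<longrightarrow> x = 0"
    and pa: "l a > 0" and pb: "l b > 0" and pc: "l c > 0"
    and o1: "mm a / l a \<le> mm b / l b" and o2: "mm b / l b \<le> mm c / l c"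
  shows "\<exists>\<alpha> \<beta>. \<alpha> \<ge> 0 \<and> \<beta> \<ge> 0 \<and> b = \<alpha> *\<^sub>R a + \<beta> *\<^sub>R c"
proof -
  define ua where "ua = mm a / l a"
  define ub where "ub = mm b / l b"
  define uc where "uc = mm c / l c"
  have ma: "mm a = ua * l a" using pa by (simp add: ua_def)
  have mb: "mm b = ub * l b" using pb by (simp add: ub_def)
  have mc: "mm c = uc * l c" using pc by (simp add: uc_def)
  have o1': "ua \<le> ub" and o2': "ub \<le> uc" using o1 o2 by (simp_all add: ua_def ub_def uc_def)
  have gen: "b = \<alpha> *\<^sub>R a + \<beta> *\<^sub>R c" if h1: "l b = \<alpha> * l a + \<beta> * l c" and h2: "mm b = \<alpha> * mm a + \<beta> * mm c" for \<alpha> \<beta>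
  proof -
    have "l (b - \<alpha> *\<^sub>R a - \<beta> *\<^sub>R c) = 0" using h1 by (simp add: linear_diff[OF ll] linear_scale[OF ll])
    moreover have "mm (b - \<alpha> *\<^sub>R a - \<beta> *\<^sub>R c) = 0" using h2 by (simp add: linear_diff[OF lm] linear_scale[OF lm])
    ultimately have "b - \<alpha> *\<^sub>R a - \<beta> *\<^sub>R c = 0" using nd by blast
    then show ?thesis by (simp add: algebra_simps)
  qed
  show ?thesis
  proof (cases "ua = uc")
    case True
    then have "ub = ua" using o1' o2' by simp
    have "b = (l b / l a) *\<^sub>R a + 0 *\<^sub>R c"
      by (rule gen) (use pa \<open>ub = ua\<close> ma mb in simp_all)
    then show ?thesis using pa pb by (intro exI[of _ "l b / l a"] exI[of _ 0]) simp
  next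
    case False
    then have lt: "ua < uc" using o1' o2' by simp
    define lam where "lam = (uc - ub) / (uc - ua)"
    have l0: "0 \<le> lam" "lam \<le> 1" using lt o1' o2' by (simp_all add: lam_def divide_simps)
    have lamid: "lam * ua + (1 - lam) * uc = ub" using lt by (simp add: lam_def divide_simps) (simp add: algebra_simps)
    have "b = (l b * lam / l a) *\<^sub>R a + (l b * (1 - lam) / l c) *\<^sub>R c"
    proof (rule gen)
      show "l b = l b * lam / l a * l a + l b * (1 - lam) / l c * l c" using pa pc by (simp add: field_simps)
      have "l b * lam / l a * mm a + l b * (1 - lam) / l c * mm c = l b * (lam * ua + (1 - lam) * uc)"
        using pa pc ma mc by (simp add: field_simps)
      then show "mm b = l b * lam / l a * mm a + l b * (1 - lam) / l c * mm c" using lamid mb by simp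
    qed
    then show ?thesis using pa pb pc l0 by (intro exI[of _ "l b * lam / l a"] exI[of _ "l b * (1 - lam) / l c"]) simp
  qed
qed



lemma gen_norming:
  fixes v w :: "'a::real_normed_vector"
  assumes HB: "\<And>u::'a. \<exists>\<psi>. linear \<psi> \<and> \<psi> u = norm u \<and> (\<forall>x. \<psi> x \<le> norm x)"
    and a: "a > 0" and b: "b > 0" and eq: "norm (a *\<^sub>R v - b *\<^sub>R w) = a * norm v + b * norm w"
  shows "\<exists>\<psi>. linear \<psi> \<and> (\<forall>x. \<psi> x \<le> norm x) \<and> \<psi> v = norm v \<and> \<psi> w = - norm w"
proof -
  obtain \<psi> where p: "linear \<psi>" "\<psi> (a *\<^sub>R v - b *\<^sub>R w) = norm (a *\<^sub>R v - b *\<^sub>R w)" "\<forall>x. \<psi> x \<le> norm x"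
    using HB by blast
  have e: "a * \<psi> v - b * \<psi> w = a * norm v + b * norm w"
    using p(2) eq by (simp add: linear_diff[OF p(1)] linear_scale[OF p(1)])
  have "\<psi> v \<le> norm v" using p(3) by blast
  moreover have "- \<psi> w \<le> norm w" using p(3)[rule_format, of "-w"] by (simp add: linear_neg[OF p(1)])
  ultimately have "a * (norm v - \<psi> v) \<ge> 0" "b * (norm w + \<psi> w) \<ge> 0"
    using a b by simp_all
  moreover have "a * (norm v - \<psi> v) + b * (norm w + \<psi> w) = 0" using e by (simp add: algebra_simps)
  ultimately have "a * (norm v - \<psi> v) + b * (norm w + \<psi> w) = 0" "a * (norm v - \<psi> v) \<ge> 0" "b * (norm w + \<psi> w) \<ge> 0"
    by auto
  then have "a * (norm v - \<psi> v) = 0" "b * (norm w + \<psi> w) = 0" by linarith+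
  then have "\<psi> v = norm v" "\<psi> w = - norm w" using a b by auto
  then show ?thesis using p by blast
qed

lemma pair:
  fixes v w d :: "'a::real_normed_vector"
  assumes HB: "\<And>u::'a. \<exists>\<psi>. linear \<psi> \<and> \<psi> u = norm u \<and> (\<forall>x. \<psi> x \<le> norm x)"
    and d: "d = \<alpha> *\<^sub>R v + \<beta> *\<^sub>R w" and ab: "\<alpha> \<ge> 0" "\<beta> \<ge> 0" and dnz: "d \<noteq> 0"
    and t: "0 < t" "t * \<alpha> < 1" "t * \<beta> < 1"
    and eq: "norm v + norm w \<le> norm (t *\<^sub>R d - v) + norm (t *\<^sub>R d - w)"
  shows "\<exists>\<psi>. linear \<psi> \<and> (\<forall>x. \<psi> x \<le> norm x) \<and> \<psi> v = norm v \<and> \<psi> w = - norm w"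
proof -
  have x1: "t *\<^sub>R d - v = (1 - t * \<alpha>) *\<^sub>R (- v) + (t * \<beta>) *\<^sub>R w" using d by (simp add: algebra_simps)
  have x2: "t *\<^sub>R d - w = (t * \<alpha>) *\<^sub>R v + (1 - t * \<beta>) *\<^sub>R (- w)" using d by (simp add: algebra_simps)
  have c1: "1 - t * \<alpha> \<ge> 0" "1 - t * \<beta> \<ge> 0" "t * \<alpha> \<ge> 0" "t * \<beta> \<ge> 0" using t ab by auto
  have "norm (t *\<^sub>R d - v) \<le> norm ((1 - t * \<alpha>) *\<^sub>R (- v)) + norm ((t * \<beta>) *\<^sub>R w)"
    unfolding x1 by (rule norm_triangle_ineq)
  also have "\<dots> = (1 - t * \<alpha>) * norm v + (t * \<beta>) * norm w" using c1 by simp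
  finally have n1: "norm (t *\<^sub>R d - v) \<le> (1 - t * \<alpha>) * norm v + (t * \<beta>) * norm w" .
  have "norm (t *\<^sub>R d - w) \<le> norm ((t * \<alpha>) *\<^sub>R v) + norm ((1 - t * \<beta>) *\<^sub>R (- w))"
    unfolding x2 by (rule norm_triangle_ineq)
  also have "\<dots> = (t * \<alpha>) * norm v + (1 - t * \<beta>) * norm w" using c1 by simp
  finally have n2: "norm (t *\<^sub>R d - w) \<le> (t * \<alpha>) * norm v + (1 - t * \<beta>) * norm w" .
  have sum: "(1 - t * \<alpha>) * norm v + (t * \<beta>) * norm w + ((t * \<alpha>) * norm v + (1 - t * \<beta>) * norm w) = norm v + norm w"
    by (simp add: algebra_simps)
  have q1: "norm (t *\<^sub>R d - v) = (1 - t * \<alpha>) * norm v + (t * \<beta>) * norm w"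
    and q2: "norm (t *\<^sub>R d - w) = (t * \<alpha>) * norm v + (1 - t * \<beta>) * norm w"
    using n1 n2 sum eq by linarith+
  show ?thesis
  proof (cases "\<alpha> > 0")
    case True
    have "t *\<^sub>R d - w = (t * \<alpha>) *\<^sub>R v - (1 - t * \<beta>) *\<^sub>R w" using x2 by simp
    then show ?thesis using gen_norming[OF HB, of "t * \<alpha>" "1 - t * \<beta>" v w] q2 t True by simp
  next
    case False
    then have "\<alpha> = 0" using ab by simp
    then have "\<beta> > 0" using ab d dnz by auto
    have "norm ((1 - t * \<alpha>) *\<^sub>R v - (t * \<beta>) *\<^sub>R w) = norm (t *\<^sub>R d - v)"
    proof -
    have "(1 - t * \<alpha>) *\<^sub>R v - (t * \<beta>) *\<^sub>R w = - (t *\<^sub>R d - v)" unfolding x1 by simp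
    then show ?thesis by (metis norm_minus_cancel)
  qed
    then show ?thesis using gen_norming[OF HB, of "1 - t * \<alpha>" "t * \<beta>" v w] q1 t \<open>\<beta> > 0\<close> by simp
  qed
qed

lemma Q1:
  fixes a b c :: "'a::real_normed_vector"
  assumes l: "linear \<psi>" and bd: "\<forall>x. \<psi> x \<le> norm x" and pb: "\<psi> b = norm b" and pc: "\<psi> c = - norm c"
    and bc: "b = \<alpha> *\<^sub>R a + \<beta> *\<^sub>R c" and ab: "\<alpha> \<ge> 0" "\<beta> \<ge> 0" and bnz: "b \<noteq> 0"
  shows "\<psi> a = norm a"
proof -
  have e: "norm b = \<alpha> * \<psi> a - \<beta> * norm c" using pb pc bc by (simp add: linear_add[OF l] linear_scale[OF l])
  have "\<alpha> \<noteq> 0"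
  proof
    assume "\<alpha> = 0"
    then have "norm b \<le> 0" using e ab by simp
    then show False using bnz by simp
  qed
  then have a0: "\<alpha> > 0" using ab by simp
  have "a = (1 / \<alpha>) *\<^sub>R (b - \<beta> *\<^sub>R c)" using bc a0 by (simp add: algebra_simps)
  then have "norm a = (1 / \<alpha>) * norm (b - \<beta> *\<^sub>R c)" using a0 by simp
  also have "\<dots> \<le> (1 / \<alpha>) * (norm b + \<beta> * norm c)"
    using a0 ab norm_triangle_ineq4[of b "\<beta> *\<^sub>R c"] by (intro mult_left_mono) auto
  also have "\<dots> = \<psi> a" using e a0 by (simp add: field_simps)
  finally show ?thesis using bd by (simp add: eq_iff)
qed

lemma Q2:
  fixes a b c :: "'a::real_normed_vector"
  assumes l: "linear \<psi>" and bd: "\<forall>x. \<psi> x \<le> norm x" and pa: "\<psi> a = norm a" and pb: "\<psi> b = - norm b"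
    and bc: "b = \<alpha> *\<^sub>R a + \<beta> *\<^sub>R c" and ab: "\<alpha> \<ge> 0" "\<beta> \<ge> 0" and bnz: "b \<noteq> 0"
  shows "\<psi> c = - norm c"
proof -
  have e: "- norm b = \<alpha> * norm a + \<beta> * \<psi> c" using pa pb bc by (simp add: linear_add[OF l] linear_scale[OF l])
  have "\<beta> \<noteq> 0"
  proof
    assume "\<beta> = 0"
    then have "- norm b = \<alpha> * norm a" using e by simp
    moreover have "\<alpha> * norm a \<ge> 0" using ab by simp
    ultimately have "norm b \<le> 0" by linarith
    then show False using bnz by simp
  qed
  then have b0: "\<beta> > 0" using ab by simp
  have "- c = (1 / \<beta>) *\<^sub>R (\<alpha> *\<^sub>R a - b)" using bc b0 by (simp add: algebra_simps)
  then have "norm c = (1 / \<beta>) * norm (\<alpha> *\<^sub>R a - b)" using b0 by (metis norm_minus_cancel norm_scaleR abs_of_pos zero_less_divide_1_iff)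
  also have "\<dots> \<le> (1 / \<beta>) * (\<alpha> * norm a + norm b)"
    using b0 ab norm_triangle_ineq4[of "\<alpha> *\<^sub>R a" b] by (intro mult_left_mono) auto
  also have "\<dots> = - \<psi> c" using e b0 by (simp add: field_simps)
  finally have "norm c \<le> - \<psi> c" .
  moreover have "- \<psi> c \<le> norm c" using bd[rule_format, of "-c"] by (simp add: linear_neg[OF l])
  ultimately show ?thesis by simp
qed



lemma face:
  fixes u :: "'a::real_normed_vector"
  assumes l: "linear \<psi>" and bd: "\<forall>x. \<psi> x \<le> norm x" and pu: "\<psi> u = norm u" and unz: "u \<noteq> 0"
  shows "proper_exposed_face (cball 0 1 \<inter> {x. \<psi> x = 1})"
  unfolding proper_exposed_face_def
proof (intro exI[of _ "{x. \<psi> x = 1}"] conjI)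
  show "supporting_line_of_ball {x. \<psi> x = 1}"
    unfolding supporting_line_of_ball_def
  proof (intro exI[of _ \<psi>] exI[of _ 1] conjI)
    show "linear \<psi>" by fact
    show "\<exists>v. \<psi> v \<noteq> 0" using pu unz by (intro exI[of _ u]) simp
    show "\<forall>x\<in>cball 0 1. \<psi> x \<le> 1" using bd by (auto intro: order_trans)
    have "\<psi> (u /\<^sub>R norm u) = 1" using pu unz by (simp add: linear_scale[OF l])
    then show "\<exists>x\<in>cball 0 1. \<psi> x = 1" using unz by (intro bexI[of _ "u /\<^sub>R norm u"]) auto
  qed simp
qed simp

lemma sum_mid:
  fixes g :: "nat \<Rightarrow> 'b::comm_monoid_add"
  shows "(\<Sum>i<2*m+1. g i) = g m + (\<Sum>r<m. g r + g (2*m - r))"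
proof (induction m arbitrary: g)
  case 0
  then show ?case by simp
next
  case (Suc m)
  have "(\<Sum>i<2*Suc m+1. g i) = (\<Sum>i<Suc (2*m+1). g i) + g (2*m+2)"
    by (simp add: numeral_2_eq_2)
  also have "(\<Sum>i<Suc (2*m+1). g i) = g 0 + (\<Sum>i<2*m+1. g (Suc i))"
    by (rule sum.lessThan_Suc_shift)
  also have "(\<Sum>i<2*m+1. g (Suc i)) = g (Suc m) + (\<Sum>r<m. g (Suc r) + g (Suc (2*m - r)))"
    using Suc.IH[of "\<lambda>i. g (Suc i)"] by simp
  also have "(\<Sum>r<m. g (Suc r) + g (Suc (2*m - r))) = (\<Sum>r<m. g (Suc r) + g (2 * Suc m - Suc r))"
    by (rule sum.cong) (auto simp: Suc_diff_le)
  finally have "(\<Sum>i<2*Suc m+1. g i) = g (Suc m) + ((g 0 + g (2 * Suc m - 0)) + (\<Sum>r<m. g (Suc r) + g (2 * Suc m - Suc r)))"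
    by (simp add: ac_simps)
  also have "(g 0 + g (2 * Suc m - 0)) + (\<Sum>r<m. g (Suc r) + g (2 * Suc m - Suc r)) = (\<Sum>r<Suc m. g r + g (2 * Suc m - r))"
    by (rule sum.lessThan_Suc_shift[symmetric])
  finally show ?case .
qed

lemma pair_ub:
  fixes v w d :: "'a::real_normed_vector"
  assumes d: "d = \<alpha> *\<^sub>R v + \<beta> *\<^sub>R w" and ab: "\<alpha> \<ge> 0" "\<beta> \<ge> 0"
    and t: "0 < t" "t * \<alpha> < 1" "t * \<beta> < 1"
  shows "norm (t *\<^sub>R d - v) + norm (t *\<^sub>R d - w) \<le> norm v + norm w"
proof -
  have x1: "t *\<^sub>R d - v = (1 - t * \<alpha>) *\<^sub>R (- v) + (t * \<beta>) *\<^sub>R w" using d by (simp add: algebra_simps)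
  have x2: "t *\<^sub>R d - w = (t * \<alpha>) *\<^sub>R v + (1 - t * \<beta>) *\<^sub>R (- w)" using d by (simp add: algebra_simps)
  have c1: "1 - t * \<alpha> \<ge> 0" "1 - t * \<beta> \<ge> 0" "t * \<alpha> \<ge> 0" "t * \<beta> \<ge> 0" using t ab by auto
  have "norm (t *\<^sub>R d - v) \<le> norm ((1 - t * \<alpha>) *\<^sub>R (- v)) + norm ((t * \<beta>) *\<^sub>R w)"
    unfolding x1 by (rule norm_triangle_ineq)
  also have "\<dots> = (1 - t * \<alpha>) * norm v + (t * \<beta>) * norm w" using c1 by simp
  finally have n1: "norm (t *\<^sub>R d - v) \<le> (1 - t * \<alpha>) * norm v + (t * \<beta>) * norm w" .
  have "norm (t *\<^sub>R d - w) \<le> norm ((t * \<alpha>) *\<^sub>R v) + norm ((1 - t * \<beta>) *\<^sub>R (- w))"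
    unfolding x2 by (rule norm_triangle_ineq)
  also have "\<dots> = (t * \<alpha>) * norm v + (1 - t * \<beta>) * norm w" using c1 by simp
  finally have n2: "norm (t *\<^sub>R d - w) \<le> (t * \<alpha>) * norm v + (1 - t * \<beta>) * norm w" .
  have sum: "(1 - t * \<alpha>) * norm v + (t * \<beta>) * norm w + ((t * \<alpha>) * norm v + (1 - t * \<beta>) * norm w) = norm v + norm w"
    by (simp add: algebra_simps)
  show ?thesis using n1 n2 sum by linarith
qed


theorem theorem4p6:
  fixes A :: "'a::real_normed_vector set" and x0 :: 'a and k :: nat
  assumes "minkowski_plane TYPE('a)"
    and "finite A" and "card A = 2 * k"
    and "x0 \<in> A"
    and "x0 \<in> FT A"
    and "x0 extreme_point_of (convex hull A)"
  shows "pseudo_double_cluster_centre A x0"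
proof -
  obtain b1 b2 :: 'a and g1 g2 where l1: "linear g1" and l2: "linear g2"
    and dec: "\<forall>x. x = g1 x *\<^sub>R b1 + g2 x *\<^sub>R b2" and g11: "g1 b1 = 1"
    using coords[OF assms(1)] by blast
  have HB: "\<And>u::'a. \<exists>\<psi>. linear \<psi> \<and> \<psi> u = norm u \<and> (\<forall>x. \<psi> x \<le> norm x)"
    using hb[OF l1 l2 dec[rule_format]] by blast
  define S where "S = A - {x0}"
  have AS: "A = insert x0 S" and x0S: "x0 \<notin> S" and finS: "finite S"
    using assms(2,4) by (auto simp: S_def)
  have cS: "card S = 2 * k - 1" using assms(2,3,4) by (simp add: S_def)
  have k1: "k \<ge> 1" using assms(2,3,4) by (cases k) auto
  have nin: "x0 \<notin> convex hull S"
  proof -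
    have "convex (convex hull A - {x0})"
      using assms(6) extreme_point_of_stillconvex[OF convex_convex_hull] by blast
    moreover have "S \<subseteq> convex hull A - {x0}" using hull_subset[of A convex] by (auto simp: S_def)
    ultimately have "convex hull S \<subseteq> convex hull A - {x0}" by (rule hull_minimal[rotated])
    then show ?thesis by blast
  qed
  have fm: "\<And>z. (\<Sum>a\<in>A. norm (x0 - a)) \<le> (\<Sum>a\<in>A. norm (z - a))"
    using assms(5) by (simp add: FT_def)
  have b1nz: "b1 \<noteq> 0" using g11 linear_0[OF l1] by auto
  show ?thesis
  proof (cases "k = 1")
    case True
    then obtain p where Sp: "S = {p}" using cS by (auto simp: card_1_singleton_iff)
    obtain \<psi> where \<psi>: "linear \<psi>" "\<psi> b1 = norm b1" "\<forall>x. \<psi> x \<le> norm x" using HB by blast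
    have F: "proper_exposed_face (cball 0 1 \<inter> {x. \<psi> x = 1})"
      using face[OF \<psi>(1) \<psi>(3) \<psi>(2) b1nz] .
    have dc: "double_cluster ({}::'a set)"
      unfolding double_cluster_def
      by (rule exI[of _ 0], rule exI[of _ "\<lambda>i. 0"], rule exI[of _ "\<lambda>i. 0"], rule exI[of _ "cball 0 1 \<inter> {x. \<psi> x = 1}"]) (use F in auto)
    have "x0 \<in> FT {}" by (simp add: FT_def)
    moreover have "A = {} \<union> {x0} \<union> {p}" using AS Sp by auto
    ultimately show ?thesis unfolding pseudo_double_cluster_centre_def using dc by blast
  next
    case False
    define m where "m = k - 1"
    have m1: "m \<ge> 1" using False k1 by (simp add: m_def)
    have cS': "card S = 2 * m + 1" using cS k1 by (simp add: m_def)
    have Sne: "S \<noteq> {}" using cS' by auto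
    obtain l mm :: "'a \<Rightarrow> real" where ll: "linear l" and lm: "linear mm"
      and lpos: "\<forall>x\<in>S. l (x - x0) > 0" and nd: "\<forall>x. l x = 0 \<longrightarrow> mm x = 0 \<longrightarrow> x = 0"
      using sep[OF l1 l2 dec[rule_format] finS Sne nin] by (elim exE conjE) (rule that)
    define \<mu> where "\<mu> x = mm (x - x0) / l (x - x0)" for x
    obtain xs0 where xs0: "set xs0 = S" "distinct xs0" using finite_distinct_list[OF finS] by blast
    define zs where "zs = sort_key \<mu> xs0"
    have zs: "set zs = S" "distinct zs" "sorted (map \<mu> zs)" using xs0 by (simp_all add: zs_def)
    have lz: "length zs = 2 * m + 1" using zs cS' distinct_card by fastforce
    define n where "n = 2 * m + 1"
    define a where "a i = zs ! i" for i
    define v where "v i = a i - x0" for i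
    have aS: "i < n \<Longrightarrow> a i \<in> S" for i using zs(1) lz by (auto simp: a_def n_def)
    have lv: "i < n \<Longrightarrow> l (v i) > 0" for i using aS lpos by (simp add: v_def)
    have vnz: "i < n \<Longrightarrow> v i \<noteq> 0" for i using lv linear_0[OF ll] by force
    have mono: "i \<le> j \<Longrightarrow> j < n \<Longrightarrow> mm (v i) / l (v i) \<le> mm (v j) / l (v j)" for i j
      using sorted_nth_mono[OF zs(3), of i j] lz by (simp add: n_def a_def v_def \<mu>_def)
    have ainj: "i < n \<Longrightarrow> j < n \<Longrightarrow> a i = a j \<Longrightarrow> i = j" for i j
      using nth_eq_iff_index_eq[OF zs(2)] lz by (simp add: a_def n_def)
    have conev: "i \<le> j \<Longrightarrow> j \<le> q \<Longrightarrow> q < n \<Longrightarrow> \<exists>\<alpha> \<beta>. \<alpha> \<ge> 0 \<and> \<beta> \<ge> 0 \<and> v j = \<alpha> *\<^sub>R v i + \<beta> *\<^sub>R v q" for i j q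
      by (rule cone[OF ll lm nd]) (use lv mono in auto)
    have sumS: "(\<Sum>x\<in>S. g x) = g (a m) + (\<Sum>r<m. g (a r) + g (a (2 * m - r)))" for g :: "'a \<Rightarrow> real"
    proof -
      have "S = a ` {..<n}" using zs(1) lz by (auto simp: a_def n_def set_conv_nth)
      moreover have "inj_on a {..<n}" using ainj by (auto simp: inj_on_def)
      ultimately have "(\<Sum>x\<in>S. g x) = (\<Sum>i<n. g (a i))" by (simp add: sum.reindex)
      also have "\<dots> = g (a m) + (\<Sum>r<m. g (a r) + g (a (2 * m - r)))"
        unfolding n_def by (rule sum_mid)
      finally show ?thesis .
    qed
    have sumA: "(\<Sum>x\<in>A. g x) = g x0 + (\<Sum>x\<in>S. g x)" for g :: "'a \<Rightarrow> real"
      using AS x0S finS by simp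
    have ex: "\<exists>\<alpha> \<beta>. \<alpha> \<ge> 0 \<and> \<beta> \<ge> 0 \<and> v m = \<alpha> *\<^sub>R v r + \<beta> *\<^sub>R v (2 * m - r)" if "r < m" for r
    proof -
      have "r \<le> m" "m \<le> 2 * m - r" "2 * m - r < n" using that by (auto simp: n_def)
      from conev[OF this] show ?thesis .
    qed
    define al where "al r = (SOME \<alpha>. \<exists>\<beta>. \<alpha> \<ge> 0 \<and> \<beta> \<ge> 0 \<and> v m = \<alpha> *\<^sub>R v r + \<beta> *\<^sub>R v (2 * m - r))" for r
    define be where "be r = (SOME \<beta>. al r \<ge> 0 \<and> \<beta> \<ge> 0 \<and> v m = al r *\<^sub>R v r + \<beta> *\<^sub>R v (2 * m - r))" for r
    have albe: "al r \<ge> 0 \<and> be r \<ge> 0 \<and> v m = al r *\<^sub>R v r + be r *\<^sub>R v (2 * m - r)" if "r < m" for r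
    proof -
      have "\<exists>\<beta>. al r \<ge> 0 \<and> \<beta> \<ge> 0 \<and> v m = al r *\<^sub>R v r + \<beta> *\<^sub>R v (2 * m - r)"
        unfolding al_def by (rule someI_ex) (use ex[OF that] in blast)
      then show ?thesis unfolding be_def by (rule someI_ex)
    qed
    define \<Sigma> where "\<Sigma> = (\<Sum>r<m. al r + be r)"
    have \<Sigma>0: "\<Sigma> \<ge> 0" unfolding \<Sigma>_def using albe by (intro sum_nonneg) (simp add: add_nonneg_nonneg)
    define t where "t = 1 / (2 + \<Sigma>)"
    have t0: "t > 0" "t \<le> 1" using \<Sigma>0 by (simp_all add: t_def)
    have tS: "t * (2 + \<Sigma>) = 1" using \<Sigma>0 by (simp add: t_def)
    have alS: "al r \<le> \<Sigma>" "be r \<le> \<Sigma>" if "r < m" for r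
    proof -
      have "al r + be r \<le> \<Sigma>" unfolding \<Sigma>_def
        by (rule member_le_sum[of r "{..<m}" "\<lambda>r. al r + be r"]) (use that albe in \<open>auto simp: add_nonneg_nonneg\<close>)
      then show "al r \<le> \<Sigma>" "be r \<le> \<Sigma>" using albe[OF that] by auto
    qed
    have tal: "t * al r < 1" "t * be r < 1" if "r < m" for r
    proof -
      have "t * al r \<le> t * \<Sigma>" "t * be r \<le> t * \<Sigma>" using alS[OF that] t0 by (simp_all add: mult_left_mono)
      moreover have "t * \<Sigma> < 1" using tS t0 by (simp add: algebra_simps)
      ultimately show "t * al r < 1" "t * be r < 1" by linarith+
    qed
    define z where "z = x0 + t *\<^sub>R v m"
    have za: "z - a i = t *\<^sub>R v m - v i" for i by (simp add: z_def v_def)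
    have x0a: "norm (x0 - a i) = norm (v i)" for i by (simp add: v_def norm_minus_commute)
    define s where "s r = norm (v r) + norm (v (2 * m - r)) - (norm (t *\<^sub>R v m - v r) + norm (t *\<^sub>R v m - v (2 * m - r)))" for r
    have s0: "s r \<ge> 0" if "r < m" for r
      using pair_ub[of "v m" "al r" "v r" "be r" "v (2 * m - r)" t] albe[OF that] t0 tal[OF that]
      by (simp add: s_def)
    have med: "norm (t *\<^sub>R v m) + norm (t *\<^sub>R v m - v m) = norm (v m)"
    proof -
      have "t *\<^sub>R v m - v m = - ((1 - t) *\<^sub>R v m)" by (simp add: algebra_simps)
      then have "norm (t *\<^sub>R v m - v m) = (1 - t) * norm (v m)" using t0 by simp
      then show ?thesis using t0 by (simp add: algebra_simps)
    qed
    have "(\<Sum>a\<in>A. norm (x0 - a)) = norm (v m) + (\<Sum>r<m. norm (v r) + norm (v (2 * m - r)))"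
      unfolding sumA sumS by (simp add: x0a)
    moreover have "(\<Sum>a\<in>A. norm (z - a)) = norm (v m) + (\<Sum>r<m. norm (t *\<^sub>R v m - v r) + norm (t *\<^sub>R v m - v (2 * m - r)))"
      unfolding sumA sumS za using med by (simp add: z_def)
    ultimately have "(\<Sum>r<m. norm (v r) + norm (v (2 * m - r))) \<le> (\<Sum>r<m. norm (t *\<^sub>R v m - v r) + norm (t *\<^sub>R v m - v (2 * m - r)))"
      using fm[of z] by simp
    then have "(\<Sum>r<m. s r) \<le> 0" by (simp add: s_def sum_subtractf)
    moreover have "(\<Sum>r<m. s r) \<ge> 0" using s0 by (intro sum_nonneg) auto
    ultimately have "(\<Sum>r<m. s r) = 0" by simp
    then have sz: "\<forall>r\<in>{..<m}. s r = 0" using s0 by (subst sum_nonneg_eq_0_iff[symmetric]) auto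
    have pex: "\<exists>\<psi>. linear \<psi> \<and> (\<forall>x. \<psi> x \<le> norm x) \<and> \<psi> (v r) = norm (v r) \<and> \<psi> (v (2 * m - r)) = - norm (v (2 * m - r))"
      if "r < m" for r
    proof (rule pair[OF HB])
      show "v m = al r *\<^sub>R v r + be r *\<^sub>R v (2 * m - r)" "0 \<le> al r" "0 \<le> be r" using albe[OF that] by auto
      show "v m \<noteq> 0" using vnz[of m] by (simp add: n_def)
      show "0 < t" "t * al r < 1" "t * be r < 1" using t0 tal[OF that] by auto
      show "norm (v r) + norm (v (2 * m - r)) \<le> norm (t *\<^sub>R v m - v r) + norm (t *\<^sub>R v m - v (2 * m - r))"
        using sz that by (simp add: s_def)
    qed
    define ps where "ps r = (SOME \<psi>. linear \<psi> \<and> (\<forall>x. \<psi> x \<le> norm x) \<and> \<psi> (v r) = norm (v r) \<and> \<psi> (v (2 * m - r)) = - norm (v (2 * m - r)))" for r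
    have ps: "linear (ps r) \<and> (\<forall>x. ps r x \<le> norm x) \<and> ps r (v r) = norm (v r) \<and> ps r (v (2 * m - r)) = - norm (v (2 * m - r))"
      if "r < m" for r
      unfolding ps_def by (rule someI_ex[OF pex[OF that]])
    have psA: "ps r (v 0) = norm (v 0) \<and> ps r (v (2 * m)) = - norm (v (2 * m))" if rm: "r < m" for r
    proof
      obtain \<alpha> \<beta> where c: "\<alpha> \<ge> 0" "\<beta> \<ge> 0" "v r = \<alpha> *\<^sub>R v 0 + \<beta> *\<^sub>R v (2 * m - r)"
      proof -
        have "0 \<le> r" "r \<le> 2 * m - r" "2 * m - r < n" using rm by (auto simp: n_def)
        from conev[OF this] show ?thesis using that by blast
      qed
      show "ps r (v 0) = norm (v 0)"
        using Q1[where \<psi>="ps r" and a="v 0" and b="v r" and c="v (2 * m - r)" and \<alpha>=\<alpha> and \<beta>=\<beta>] ps[OF rm] c vnz[of r] rm by (simp add: n_def)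
      obtain \<alpha>' \<beta>' where c': "\<alpha>' \<ge> 0" "\<beta>' \<ge> 0" "v (2 * m - r) = \<alpha>' *\<^sub>R v r + \<beta>' *\<^sub>R v (2 * m)"
      proof -
        have "r \<le> 2 * m - r" "2 * m - r \<le> 2 * m" "2 * m < n" using rm by (auto simp: n_def)
        from conev[OF this] show ?thesis using that by blast
      qed
      show "ps r (v (2 * m)) = - norm (v (2 * m))"
        using Q2[where \<psi>="ps r" and a="v r" and b="v (2 * m - r)" and c="v (2 * m)" and \<alpha>=\<alpha>' and \<beta>=\<beta>'] ps[OF rm] c' vnz[of "2 * m - r"] rm by (simp add: n_def)
    qed
    define \<psi> where "\<psi> = ps 0"
    have \<psi>: "linear \<psi>" "\<forall>x. \<psi> x \<le> norm x" using ps[of 0] m1 by (auto simp: \<psi>_def)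
    have agree: "\<psi> (v i) = ps r (v i)" if rm: "r < m" and im: "i \<le> 2 * m" for r i
    proof -
      obtain \<alpha> \<beta> where c: "v i = \<alpha> *\<^sub>R v 0 + \<beta> *\<^sub>R v (2 * m)"
      proof -
        have "0 \<le> i" "i \<le> 2 * m" "2 * m < n" using im by (auto simp: n_def)
        from conev[OF this] show ?thesis using that by blast
      qed
      have l0: "linear (ps r)" using ps[OF rm] by blast
      have "\<psi> (v i) = \<alpha> * norm (v 0) - \<beta> * norm (v (2 * m))"
        unfolding c using \<psi>(1) psA[of 0] m1 by (simp add: linear_add linear_scale \<psi>_def)
      also have "\<dots> = ps r (v i)"
        unfolding c using l0 psA[OF rm] by (simp add: linear_add linear_scale)
      finally show ?thesis .
    qed
    have \<psi>p: "\<psi> (v r) = norm (v r)" "\<psi> (v (2 * m - r)) = - norm (v (2 * m - r))" if "r < m" for r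
      using agree[OF that, of r] agree[OF that, of "2 * m - r"] ps[OF that] that by auto
    define xs where "xs r = a r" for r
    define ys where "ys r = a (2 * m - r)" for r
    define C where "C = xs ` {..<m} \<union> ys ` {..<m}"
    have amS: "a m \<in> S" using aS[of m] by (simp add: n_def)
    have CS: "C = S - {a m}"
    proof
      show "C \<subseteq> S - {a m}"
      proof
        fix x assume "x \<in> C"
        then obtain r where r: "r < m" "x = a r \<or> x = a (2 * m - r)" by (auto simp: C_def xs_def ys_def)
        have i: "r < n" "2 * m - r < n" "m < n" "r \<noteq> m" "2 * m - r \<noteq> m" using r(1) by (auto simp: n_def)
        then have "a r \<noteq> a m" "a (2 * m - r) \<noteq> a m" using ainj by blast+
        then show "x \<in> S - {a m}"
          using aS[OF i(1)] aS[OF i(2)] r(2) by auto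
      qed
      show "S - {a m} \<subseteq> C"
      proof
        fix x assume x: "x \<in> S - {a m}"
        then obtain i where i: "i < n" "x = a i" using zs(1) lz by (auto simp: a_def n_def in_set_conv_nth)
        have "i \<noteq> m" using x i by auto
        show "x \<in> C"
        proof (cases "i < m")
          case True then show ?thesis using i by (auto simp: C_def xs_def)
        next
          case False
          then have "2 * m - i < m" "2 * m - (2 * m - i) = i" using \<open>i \<noteq> m\<close> i by (auto simp: n_def)
          then show ?thesis using i unfolding C_def ys_def by (metis imageI UnI2 lessThan_iff)
        qed
      qed
    qed
    have cC: "card C = 2 * m" using CS cS' amS finS by simp
    have \<psi>0: "\<psi> (v 0) = norm (v 0)" using \<psi>p[of 0] m1 by simp
    have F: "proper_exposed_face (cball 0 1 \<inter> {x. \<psi> x = 1})"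
      using face[OF \<psi>(1) \<psi>(2) \<psi>0] vnz[of 0] by (simp add: n_def)
    have Dn: "norm (xs r - ys r) = norm (v r) + norm (v (2 * m - r)) \<and> \<psi> (xs r - ys r) = norm (xs r - ys r)" if r: "r < m" for r
    proof -
      have e: "xs r - ys r = v r - v (2 * m - r)" by (simp add: xs_def ys_def v_def)
      have p: "\<psi> (xs r - ys r) = norm (v r) + norm (v (2 * m - r))"
        unfolding e using \<psi>p[OF r] linear_diff[OF \<psi>(1)] by simp
      have "norm (xs r - ys r) \<le> norm (v r) + norm (v (2 * m - r))" unfolding e by (rule norm_triangle_ineq4)
      moreover have "\<psi> (xs r - ys r) \<le> norm (xs r - ys r)" using \<psi>(2) by blast
      ultimately show ?thesis using p by linarith
    qed
    have unit: "\<forall>r<m. (1 / norm (xs r - ys r)) *\<^sub>R (xs r - ys r) \<in> cball 0 1 \<inter> {x. \<psi> x = 1}"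
    proof (intro allI impI)
      fix r assume r: "r < m"
      have "norm (v r) > 0" using vnz[of r] r by (simp add: n_def)
      then have pos: "norm (xs r - ys r) > 0" using Dn[OF r] by (simp add: add_pos_nonneg)
      show "(1 / norm (xs r - ys r)) *\<^sub>R (xs r - ys r) \<in> cball 0 1 \<inter> {x. \<psi> x = 1}"
        using Dn[OF r] pos by (simp add: linear_scale[OF \<psi>(1)])
    qed
    have dc: "double_cluster C" unfolding double_cluster_def
      by (rule exI[of _ m], rule exI[of _ xs], rule exI[of _ ys], rule exI[of _ "cball 0 1 \<inter> {x. \<psi> x = 1}"])
        (use cC F unit C_def in blast)
    have sumC: "(\<Sum>x\<in>C. g x) = (\<Sum>r<m. g (a r) + g (a (2 * m - r)))" for g :: "'a \<Rightarrow> real"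
      using sumS[of g] CS finS amS by (simp add: sum_diff1)
    have FTC: "x0 \<in> FT C"
      unfolding FT_def
    proof (intro CollectI allI)
      fix z' :: 'a
      show "(\<Sum>y\<in>C. norm (x0 - y)) \<le> (\<Sum>y\<in>C. norm (z' - y))"
        unfolding sumC
      proof (rule sum_mono)
        fix r assume "r \<in> {..<m}"
        then have r: "r < m" by simp
        have "norm (x0 - a r) + norm (x0 - a (2 * m - r)) = norm (xs r - ys r)" using Dn[OF r] x0a by simp
        also have "xs r - ys r = (z' - ys r) - (z' - xs r)" by simp
        also have "norm \<dots> \<le> norm (z' - ys r) + norm (z' - xs r)" by (rule norm_triangle_ineq4)
        finally show "norm (x0 - a r) + norm (x0 - a (2 * m - r)) \<le> norm (z' - a r) + norm (z' - a (2 * m - r))"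
          by (simp add: xs_def ys_def)
      qed
    qed
    have "A = C \<union> {x0} \<union> {a m}" using AS CS amS by auto
    then show ?thesis unfolding pseudo_double_cluster_centre_def using dc FTC by blast

  qed
qed

end
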